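(* Let $(R,\mathfrak{m})$ be a one-dimensional Cohen–Macaulay local ring, let $J$ be a regular ideal with a principal reduction $(x)$, and let $I=\operatorname{tr}(J)$. Consider the conditions: (1) $I\cong I^2$; (2) $I=(x):_R J$; (3) $I\cong(x):_R J$; (4) $I\cong J^*$. Then (1) implies (2), and (2), (3), (4) are equivalent.
   Context: $J^*=\operatorname{Hom}_R(J,R)$ and $\operatorname{tr}(J)$ is the image of $J\otimes_R J^*\to R$, $a\otimes\alpha\mapsto\alpha(a)$. An ideal is regular if it contains a nonzerodivisor. A principal reduction of $J$ is a principal ideal $(x)\subseteq J$ with $xJ^n=J^{n+1}$ for some $n$. *)

theory Defs
  imports Main "HOL-Library.Extended_Nat"
begin

definition is_ideal :: "'a::comm_ring_1 set \<Rightarrow> bool" where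
  "is_ideal I \<longleftrightarrow> 0 \<in> I \<and> (\<forall>a\<in>I. \<forall>b\<in>I. a + b \<in> I) \<and> (\<forall>r. \<forall>a\<in>I. r * a \<in> I)"

definition ideal_gen :: "'a::comm_ring_1 set \<Rightarrow> 'a set" where
  "ideal_gen S = \<Inter>{I. is_ideal I \<and> S \<subseteq> I}"

definition principal :: "'a::comm_ring_1 \<Rightarrow> 'a set" where
  "principal x = {x * s | s. True}"

definition ideal_mult :: "'a::comm_ring_1 set \<Rightarrow> 'a set \<Rightarrow> 'a set" where
  "ideal_mult I K = ideal_gen {a * b | a b. a \<in> I \<and> b \<in> K}"

primrec ideal_pow :: "'a::comm_ring_1 set \<Rightarrow> nat \<Rightarrow> 'a set" where
  "ideal_pow I 0 = UNIV"
| "ideal_pow I (Suc n) = ideal_mult I (ideal_pow I n)"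

definition colon :: "'a::comm_ring_1 set \<Rightarrow> 'a set \<Rightarrow> 'a set" where
  "colon I K = {r. \<forall>a\<in>K. r * a \<in> I}"

definition prime_ideal :: "'a::comm_ring_1 set \<Rightarrow> bool" where
  "prime_ideal P \<longleftrightarrow> is_ideal P \<and> P \<noteq> UNIV \<and> (\<forall>a b. a * b \<in> P \<longrightarrow> a \<in> P \<or> b \<in> P)"

definition maximal_ideal :: "'a::comm_ring_1 set \<Rightarrow> bool" where
  "maximal_ideal M \<longleftrightarrow> is_ideal M \<and> M \<noteq> UNIV \<and>
     (\<forall>K. is_ideal K \<longrightarrow> M \<subseteq> K \<longrightarrow> K = M \<or> K = UNIV)"

definition local_ring :: "'a::comm_ring_1 itself \<Rightarrow> bool" where
  "local_ring _ \<longleftrightarrow> (\<exists>!M::'a set. maximal_ideal M)"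

definition max_ideal :: "'a::comm_ring_1 set" where
  "max_ideal = (THE M. maximal_ideal M)"

definition noetherian_ring :: "'a::comm_ring_1 itself \<Rightarrow> bool" where
  "noetherian_ring _ \<longleftrightarrow> (\<forall>I::'a set. is_ideal I \<longrightarrow> (\<exists>F. finite F \<and> I = ideal_gen F))"

definition prime_chain :: "nat \<Rightarrow> (nat \<Rightarrow> 'a::comm_ring_1 set) \<Rightarrow> bool" where
  "prime_chain n c \<longleftrightarrow> (\<forall>i\<le>n. prime_ideal (c i)) \<and> (\<forall>i<n. c i \<subset> c (Suc i))"

definition krull_dim :: "'a::comm_ring_1 itself \<Rightarrow> enat" where
  "krull_dim _ = Sup {enat n | n. \<exists>c::nat \<Rightarrow> 'a set. prime_chain n c}"

definition regular_sequence :: "'a::comm_ring_1 list \<Rightarrow> bool" where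
  "regular_sequence xs \<longleftrightarrow>
     (\<forall>i<length xs. \<forall>y. xs ! i * y \<in> ideal_gen (set (take i xs)) \<longrightarrow> y \<in> ideal_gen (set (take i xs)))
     \<and> ideal_gen (set xs) \<noteq> UNIV"

definition depth :: "'a::comm_ring_1 itself \<Rightarrow> enat" where
  "depth _ = Sup {enat (length xs) | xs::'a list. set xs \<subseteq> max_ideal \<and> regular_sequence xs}"

definition cohen_macaulay_local :: "'a::comm_ring_1 itself \<Rightarrow> bool" where
  "cohen_macaulay_local T \<longleftrightarrow> noetherian_ring T \<and> local_ring T \<and> depth T = krull_dim T"

definition nonzerodivisor :: "'a::comm_ring_1 \<Rightarrow> bool" where
  "nonzerodivisor a \<longleftrightarrow> (\<forall>y. a * y = 0 \<longrightarrow> y = 0)"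

definition regular_ideal :: "'a::comm_ring_1 set \<Rightarrow> bool" where
  "regular_ideal J \<longleftrightarrow> (\<exists>a\<in>J. nonzerodivisor a)"

definition principal_reduction :: "'a::comm_ring_1 \<Rightarrow> 'a set \<Rightarrow> bool" where
  "principal_reduction x J \<longleftrightarrow> x \<in> J \<and>
     (\<exists>n. ideal_mult (principal x) (ideal_pow J n) = ideal_pow J (Suc n))"

definition dual :: "'a::comm_ring_1 set \<Rightarrow> ('a \<Rightarrow> 'a) set" where
  "dual J = {\<alpha>. (\<forall>a\<in>J. \<forall>b\<in>J. \<alpha> (a + b) = \<alpha> a + \<alpha> b) \<and> (\<forall>r. \<forall>a\<in>J. \<alpha> (r * a) = r * \<alpha> a)
               \<and> (\<forall>y. y \<notin> J \<longrightarrow> \<alpha> y = 0)}"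

text \<open>tr(J): image of J \<otimes> J* \<rightarrow> R, i.e. the ideal generated by all \<alpha>(a).\<close>
definition trace_ideal :: "'a::comm_ring_1 set \<Rightarrow> 'a set" where
  "trace_ideal J = ideal_gen {\<alpha> a | \<alpha> a. \<alpha> \<in> dual J \<and> a \<in> J}"

definition ideal_iso :: "'a::comm_ring_1 set \<Rightarrow> 'a set \<Rightarrow> bool" where
  "ideal_iso I K \<longleftrightarrow> (\<exists>f. bij_betw f I K \<and> (\<forall>a\<in>I. \<forall>b\<in>I. f (a + b) = f a + f b)
                          \<and> (\<forall>r. \<forall>a\<in>I. f (r * a) = r * f a))"

definition ideal_iso_dual :: "'a::comm_ring_1 set \<Rightarrow> 'a set \<Rightarrow> bool" where
  "ideal_iso_dual I J \<longleftrightarrow> (\<exists>f. bij_betw f I (dual J)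
       \<and> (\<forall>a\<in>I. \<forall>b\<in>I. f (a + b) = (\<lambda>y. f a y + f b y))
       \<and> (\<forall>r. \<forall>a\<in>I. f (r * a) = (\<lambda>y. r * f a y)))"

end

theory Submission
  imports Defs
begin


lemma ideal_gen_ideal: "is_ideal (ideal_gen S)"
  unfolding ideal_gen_def is_ideal_def by auto

lemma ideal_gen_sub: "S \<subseteq> ideal_gen S"
  unfolding ideal_gen_def by auto

lemma ideal_gen_least: "is_ideal T \<Longrightarrow> S \<subseteq> T \<Longrightarrow> ideal_gen S \<subseteq> T"
  unfolding ideal_gen_def by auto

lemma ideal_UNIV: "is_ideal (UNIV::'a::comm_ring_1 set)"
  unfolding is_ideal_def by auto

lemma ideal_preimage:
  assumes "is_ideal T" shows "is_ideal {z. c * z \<in> T}"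
  using assms unfolding is_ideal_def
  by (auto simp: distrib_left mult.left_commute)

lemma ideal_mult_ideal: "is_ideal (ideal_mult A B)"
  unfolding ideal_mult_def by (rule ideal_gen_ideal)

lemma ideal_mult_mem: "a \<in> A \<Longrightarrow> b \<in> B \<Longrightarrow> a * b \<in> ideal_mult A B"
  unfolding ideal_mult_def by (rule subsetD[OF ideal_gen_sub]) blast

lemma ideal_mult_least:
  assumes "is_ideal T" "\<And>a b. a \<in> A \<Longrightarrow> b \<in> B \<Longrightarrow> a * b \<in> T"
  shows "ideal_mult A B \<subseteq> T"
  unfolding ideal_mult_def using assms(2) by (intro ideal_gen_least[OF assms(1)]) blast

lemma ideal_mult_comm: "ideal_mult A B = ideal_mult B A"
proof -
  have "{a * b | a b. a \<in> A \<and> b \<in> B} = {a * b | a b. a \<in> B \<and> b \<in> A}"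
    by (auto, metis mult.commute, metis mult.commute)
  then show ?thesis unfolding ideal_mult_def by simp
qed

lemma ideal_mult_assoc1:
  "ideal_mult A (ideal_mult B C) \<subseteq> ideal_mult (ideal_mult A B) C"
proof (rule ideal_mult_least[OF ideal_mult_ideal])
  fix a z assume a: "a \<in> A" and z: "z \<in> ideal_mult B C"
  have "ideal_mult B C \<subseteq> {z. a * z \<in> ideal_mult (ideal_mult A B) C}"
  proof (rule ideal_mult_least[OF ideal_preimage[OF ideal_mult_ideal]])
    fix b c assume "b \<in> B" "c \<in> C"
    then have "(a * b) * c \<in> ideal_mult (ideal_mult A B) C"
      using a by (intro ideal_mult_mem) auto
    then show "b * c \<in> {z. a * z \<in> ideal_mult (ideal_mult A B) C}"
      by (simp add: mult.assoc)
  qed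
  then show "a * z \<in> ideal_mult (ideal_mult A B) C" using z by auto
qed

lemma ideal_mult_assoc:
  "ideal_mult A (ideal_mult B C) = ideal_mult (ideal_mult A B) C"
proof
  show "ideal_mult A (ideal_mult B C) \<subseteq> ideal_mult (ideal_mult A B) C"
    by (rule ideal_mult_assoc1)
  have "ideal_mult (ideal_mult A B) C = ideal_mult C (ideal_mult B A)"
    by (simp add: ideal_mult_comm)
  also have "\<dots> \<subseteq> ideal_mult (ideal_mult C B) A" by (rule ideal_mult_assoc1)
  also have "\<dots> = ideal_mult A (ideal_mult B C)" by (simp add: ideal_mult_comm)
  finally show "ideal_mult (ideal_mult A B) C \<subseteq> ideal_mult A (ideal_mult B C)" .
qed

definition scl :: "'a::comm_ring_1 \<Rightarrow> 'a set \<Rightarrow> 'a set" where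
  "scl c S = (\<lambda>s. c * s) ` S"

lemma scl_ideal: "is_ideal S \<Longrightarrow> is_ideal (scl c S)"
  unfolding is_ideal_def scl_def
proof (intro conjI ballI allI)
  assume S: "0 \<in> S \<and> (\<forall>a\<in>S. \<forall>b\<in>S. a + b \<in> S) \<and> (\<forall>r. \<forall>a\<in>S. r * a \<in> S)"
  show "0 \<in> (*) c ` S" using S by (auto intro!: image_eqI[of _ _ 0])
  fix a b assume "a \<in> (*) c ` S" "b \<in> (*) c ` S"
  then obtain s t where "s \<in> S" "t \<in> S" "a = c * s" "b = c * t" by auto
  then show "a + b \<in> (*) c ` S" using S by (auto intro!: image_eqI[of _ _ "s + t"] simp: distrib_left)
next
  assume S: "0 \<in> S \<and> (\<forall>a\<in>S. \<forall>b\<in>S. a + b \<in> S) \<and> (\<forall>r. \<forall>a\<in>S. r * a \<in> S)"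
  fix r a assume "a \<in> (*) c ` S"
  then obtain s where "s \<in> S" "a = c * s" by auto
  then show "r * a \<in> (*) c ` S" using S by (auto intro!: image_eqI[of _ _ "r * s"] simp: mult.left_commute)
qed

lemma scl_scl: "scl a (scl b S) = scl (a * b) S"
  unfolding scl_def image_image by (simp add: mult.assoc)

lemma scl_one: "scl 1 S = S"
  unfolding scl_def by simp

lemma scl_mult: "ideal_mult A (scl c B) = scl c (ideal_mult A B)"
proof
  show "ideal_mult A (scl c B) \<subseteq> scl c (ideal_mult A B)"
  proof (rule ideal_mult_least[OF scl_ideal[OF ideal_mult_ideal]])
    fix a z assume "a \<in> A" "z \<in> scl c B"
    then obtain b where b: "b \<in> B" "z = c * b" unfolding scl_def by auto
    then show "a * z \<in> scl c (ideal_mult A B)"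
      using \<open>a \<in> A\<close> unfolding scl_def
      by (auto intro!: image_eqI[of _ _ "a * b"] ideal_mult_mem simp: mult.left_commute)
  qed
  have "ideal_mult A B \<subseteq> {y. c * y \<in> ideal_mult A (scl c B)}"
  proof (rule ideal_mult_least[OF ideal_preimage[OF ideal_mult_ideal]])
    fix a b assume "a \<in> A" "b \<in> B"
    then have "a * (c * b) \<in> ideal_mult A (scl c B)"
      by (intro ideal_mult_mem) (auto simp: scl_def)
    then show "a * b \<in> {y. c * y \<in> ideal_mult A (scl c B)}"
      by (simp add: mult.left_commute)
  qed
  then show "scl c (ideal_mult A B) \<subseteq> ideal_mult A (scl c B)"
    unfolding scl_def by auto
qed

lemma principal_scl: "principal x = scl x UNIV"
  unfolding principal_def scl_def by auto

lemma mult_UNIV: "is_ideal B \<Longrightarrow> ideal_mult UNIV B = B"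
proof
  assume B: "is_ideal B"
  show "ideal_mult UNIV B \<subseteq> B"
    by (rule ideal_mult_least[OF B]) (use B in \<open>auto simp: is_ideal_def\<close>)
  show "B \<subseteq> ideal_mult UNIV B"
    using ideal_mult_mem[of 1 UNIV] by fastforce
qed

lemma mult_principal: "is_ideal B \<Longrightarrow> ideal_mult (principal x) B = scl x B"
proof -
  assume B: "is_ideal B"
  have "ideal_mult (principal x) B = ideal_mult B (scl x UNIV)"
    by (simp add: principal_scl ideal_mult_comm)
  also have "\<dots> = scl x (ideal_mult B UNIV)" by (rule scl_mult)
  also have "ideal_mult B UNIV = B" using mult_UNIV[OF B] by (simp add: ideal_mult_comm)
  finally show ?thesis .
qed

lemma scl_cancel:
  assumes "nonzerodivisor c" "scl c A = scl c B" shows "A = B"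
proof -
  have "inj (\<lambda>s. c * s)"
  proof (rule injI)
    fix s t assume "c * s = c * t"
    then have "c * (s - t) = 0" by (simp add: right_diff_distrib)
    then show "s = t" using assms(1) unfolding nonzerodivisor_def by auto
  qed
  then show ?thesis using assms(2) unfolding scl_def by (simp add: inj_image_eq_iff)
qed

lemma nzd_mult: "nonzerodivisor a \<Longrightarrow> nonzerodivisor b \<Longrightarrow> nonzerodivisor (a * b)"
  unfolding nonzerodivisor_def
proof (intro allI impI)
  fix y assume a: "\<forall>y. a * y = 0 \<longrightarrow> y = 0" and b: "\<forall>y. b * y = 0 \<longrightarrow> y = 0"
    and ab: "a * b * y = 0"
  from ab have "a * (b * y) = 0" by (simp only: mult.assoc)
  then have "b * y = 0" using a by blast
  then show "y = 0" using b by blast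
qed

lemma nzd_power: "nonzerodivisor a \<Longrightarrow> nonzerodivisor (a ^ m)"
proof (induction m)
  case 0 then show ?case by (simp add: nonzerodivisor_def)
next
  case (Suc m) then show ?case by (simp add: nzd_mult)
qed

lemma ideal_pow_ideal: "is_ideal (ideal_pow J m)"
  by (cases m) (auto simp: ideal_UNIV ideal_mult_ideal)

lemma pow_mem: "a \<in> J \<Longrightarrow> a ^ m \<in> ideal_pow J m"
  by (induction m) (auto intro: ideal_mult_mem)

lemma principal_ideal: "is_ideal (principal x)"
  by (simp add: principal_scl scl_ideal ideal_UNIV)



lemma x_nzd:
  assumes J: "is_ideal J" and reg: "regular_ideal J" and red: "principal_reduction x J"
  shows "nonzerodivisor x"
proof -
  obtain a where a: "a \<in> J" "nonzerodivisor a" using reg unfolding regular_ideal_def by auto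
  obtain n where n: "ideal_mult (principal x) (ideal_pow J n) = ideal_pow J (Suc n)"
    using red unfolding principal_reduction_def by auto
  have "a ^ Suc n \<in> ideal_pow J (Suc n)" by (rule pow_mem[OF a(1)])
  then have "a ^ Suc n \<in> scl x (ideal_pow J n)"
    using n mult_principal[OF ideal_pow_ideal] by metis
  then obtain s where s: "a ^ Suc n = x * s" unfolding scl_def by auto
  have an: "nonzerodivisor (a ^ Suc n)" by (rule nzd_power[OF a(2)])
  show ?thesis unfolding nonzerodivisor_def
  proof (intro allI impI)
    fix y assume xy: "x * y = 0"
    have "a ^ Suc n * y = s * (x * y)" by (subst s) (simp add: mult_ac)
    also have "\<dots> = 0" by (simp add: xy)
    finally show "y = 0" using an unfolding nonzerodivisor_def by blast
  qed
qed

definition dv :: "'a::comm_ring_1 \<Rightarrow> 'a \<Rightarrow> 'a \<Rightarrow> 'a" where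
  "dv x k y = (THE s. k * y = x * s)"

lemma dv_eq:
  assumes x: "nonzerodivisor x" and e: "k * y = x * s"
  shows "dv x k y = s"
  unfolding dv_def
proof (rule the_equality)
  show "k * y = x * s" by (rule e)
  fix t assume "k * y = x * t"
  then have "x * (t - s) = 0" using e by (simp add: right_diff_distrib)
  then have "t - s = 0" using x unfolding nonzerodivisor_def by blast
  then show "t = s" by simp
qed

definition al :: "'a::comm_ring_1 \<Rightarrow> 'a set \<Rightarrow> 'a \<Rightarrow> 'a \<Rightarrow> 'a" where
  "al x J k = (\<lambda>y. if y \<in> J then dv x k y else 0)"

lemma colon_eq:
  assumes x: "nonzerodivisor x" and k: "k \<in> colon (principal x) J" and a: "a \<in> J"
  shows "k * a = x * dv x k a"
proof -
  obtain s where "k * a = x * s" using k a unfolding colon_def principal_def by auto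
  then show ?thesis using dv_eq[OF x] by metis
qed

lemma al_dual:
  assumes x: "nonzerodivisor x" and J: "is_ideal J" and k: "k \<in> colon (principal x) J"
  shows "al x J k \<in> dual J"
  unfolding dual_def
proof (intro CollectI conjI ballI allI impI)
  fix a b assume a: "a \<in> J" and b: "b \<in> J"
  then have ab: "a + b \<in> J" using J unfolding is_ideal_def by auto
  have "k * (a + b) = x * (dv x k a + dv x k b)"
    using colon_eq[OF x k a] colon_eq[OF x k b] by (simp add: distrib_left)
  then have "dv x k (a + b) = dv x k a + dv x k b" by (rule dv_eq[OF x])
  then show "al x J k (a + b) = al x J k a + al x J k b"
    using a b ab by (simp add: al_def)
next
  fix r a assume a: "a \<in> J"
  then have ra: "r * a \<in> J" using J unfolding is_ideal_def by auto
  have "k * (r * a) = r * (k * a)" by (simp add: mult_ac)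
  also have "\<dots> = x * (r * dv x k a)" using colon_eq[OF x k a] by (simp add: mult_ac)
  finally have "k * (r * a) = x * (r * dv x k a)" .
  then have "dv x k (r * a) = r * dv x k a" by (rule dv_eq[OF x])
  then show "al x J k (r * a) = r * al x J k a" using a ra by (simp add: al_def)
next
  fix y assume "y \<notin> J" then show "al x J k y = 0" by (simp add: al_def)
qed

lemma al_x:
  assumes x: "nonzerodivisor x" and xJ: "x \<in> J"
  shows "al x J k x = k"
  using xJ dv_eq[OF x, of k x k] by (simp add: al_def mult.commute)

lemma dual_lin:
  assumes "\<alpha> \<in> dual J" "a \<in> J"
  shows "\<alpha> (r * a) = r * \<alpha> a"
  using assms unfolding dual_def by auto

lemma dual_add:
  assumes "\<alpha> \<in> dual J" "a \<in> J" "b \<in> J"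
  shows "\<alpha> (a + b) = \<alpha> a + \<alpha> b"
  using assms unfolding dual_def by auto

lemma dual_out:
  assumes "\<alpha> \<in> dual J" "y \<notin> J"
  shows "\<alpha> y = 0"
  using assms unfolding dual_def by auto

lemma dual_swap:
  assumes "\<alpha> \<in> dual J" "a \<in> J" "b \<in> J"
  shows "a * \<alpha> b = b * \<alpha> a"
  using dual_lin[OF assms(1,2), of b] dual_lin[OF assms(1,3), of a]
  by (simp add: mult.commute)

lemma dual_repr:
  assumes x: "nonzerodivisor x" and xJ: "x \<in> J" and \<alpha>: "\<alpha> \<in> dual J"
  shows "\<alpha> x \<in> colon (principal x) J" and "al x J (\<alpha> x) = \<alpha>"
proof -
  show K: "\<alpha> x \<in> colon (principal x) J"
  proof -
    have "\<forall>b\<in>J. \<alpha> x * b = x * \<alpha> b" using dual_swap[OF \<alpha> xJ] by (simp add: mult.commute)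
    then show ?thesis unfolding colon_def principal_def by auto
  qed
  show "al x J (\<alpha> x) = \<alpha>"
  proof
    fix y show "al x J (\<alpha> x) y = \<alpha> y"
    proof (cases "y \<in> J")
      case True
      have "\<alpha> x * y = x * \<alpha> y" using dual_swap[OF \<alpha> xJ True] by (simp add: mult.commute)
      then show ?thesis using True dv_eq[OF x] by (simp add: al_def)
    next
      case False then show ?thesis using dual_out[OF \<alpha>] by (simp add: al_def)
    qed
  qed
qed

lemma trace_ideal_ideal: "is_ideal (trace_ideal J)"
  unfolding trace_ideal_def by (rule ideal_gen_ideal)

lemma trace_gen: "\<alpha> \<in> dual J \<Longrightarrow> a \<in> J \<Longrightarrow> \<alpha> a \<in> trace_ideal J"
  unfolding trace_ideal_def by (rule subsetD[OF ideal_gen_sub]) blast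

lemma colon_ideal: "is_ideal (colon (principal x) J)"
  using principal_ideal[of x] unfolding is_ideal_def colon_def
  by (auto simp: distrib_right mult.assoc)

lemma K_sub_I:
  assumes x: "nonzerodivisor x" and xJ: "x \<in> J" and J: "is_ideal J"
  shows "colon (principal x) J \<subseteq> trace_ideal J"
proof
  fix k assume k: "k \<in> colon (principal x) J"
  have "al x J k x \<in> trace_ideal J" by (rule trace_gen[OF al_dual[OF x J k] xJ])
  then show "k \<in> trace_ideal J" using al_x[OF x xJ] by simp
qed

lemma x_in_K: "x \<in> colon (principal x) J"
  unfolding colon_def principal_def by auto

lemma lemT:
  assumes x: "nonzerodivisor x" and xJ: "x \<in> J" and J: "is_ideal J"
  shows "ideal_mult J (colon (principal x) J) = scl x (trace_ideal J)"
proof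
  show "ideal_mult J (colon (principal x) J) \<subseteq> scl x (trace_ideal J)"
  proof (rule ideal_mult_least[OF scl_ideal[OF trace_ideal_ideal]])
    fix a k assume a: "a \<in> J" and k: "k \<in> colon (principal x) J"
    have "al x J k a \<in> trace_ideal J" by (rule trace_gen[OF al_dual[OF x J k] a])
    moreover have "a * k = x * al x J k a"
      using colon_eq[OF x k a] a by (simp add: al_def mult.commute)
    ultimately show "a * k \<in> scl x (trace_ideal J)" unfolding scl_def by auto
  qed
  have "trace_ideal J \<subseteq> {y. x * y \<in> ideal_mult J (colon (principal x) J)}"
    unfolding trace_ideal_def
  proof (rule ideal_gen_least[OF ideal_preimage[OF ideal_mult_ideal]])
    show "{\<alpha> a |\<alpha> a. \<alpha> \<in> dual J \<and> a \<in> J} \<subseteq> {y. x * y \<in> ideal_mult J (colon (principal x) J)}"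
    proof
      fix z assume "z \<in> {\<alpha> a |\<alpha> a. \<alpha> \<in> dual J \<and> a \<in> J}"
      then obtain \<alpha> a where z: "z = \<alpha> a" and \<alpha>: "\<alpha> \<in> dual J" and a: "a \<in> J" by auto
      have "x * \<alpha> a = a * \<alpha> x" by (rule dual_swap[OF \<alpha> xJ a])
      moreover have "a * \<alpha> x \<in> ideal_mult J (colon (principal x) J)"
        by (rule ideal_mult_mem[OF a dual_repr(1)[OF x xJ \<alpha>]])
      ultimately show "z \<in> {y. x * y \<in> ideal_mult J (colon (principal x) J)}" using z by simp
    qed
  qed
  then show "scl x (trace_ideal J) \<subseteq> ideal_mult J (colon (principal x) J)"
    unfolding scl_def by auto
qed



lemma iso_rep:
  fixes f :: "'a::comm_ring_1 \<Rightarrow> 'a"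
  assumes lin: "\<forall>r. \<forall>a\<in>I. f (r * a) = r * f a" and xI: "x \<in> I" and y: "y \<in> I"
  shows "x * f y = y * f x"
proof -
  have e1: "f (x * y) = x * f y" using lin y by blast
  have "x * f y = f (x * y)" using e1 by (rule sym)
  also have "x * y = y * x" by (rule mult.commute)
  also have "f (y * x) = y * f x" using lin xI by blast
  finally show ?thesis .
qed

lemma scl_mem: "z \<in> scl c S \<longleftrightarrow> (\<exists>s\<in>S. z = c * s)"
  unfolding scl_def by auto

lemma pow2: "(x::'a::comm_ring_1) ^ (2 * Suc m) = x ^ (2 * m) * (x * x)"
  by (simp add: power_add mult_2 power_Suc2 mult.assoc)

lemma three_two:
  assumes x: "nonzerodivisor x" and xJ: "x \<in> J" and J: "is_ideal J"
    and n: "ideal_mult (principal x) (ideal_pow J n) = ideal_pow J (Suc n)"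
    and I: "I = trace_ideal J" and K: "K = colon (principal x) J"
    and iso: "ideal_iso I K"
  shows "I = K"
proof -
  obtain f where bij: "bij_betw f I K" and lin: "\<forall>r. \<forall>a\<in>I. f (r * a) = r * f a"
    using iso unfolding ideal_iso_def by blast
  have KI: "K \<subseteq> I" using K_sub_I[OF x xJ J] I K by simp
  have xK: "x \<in> K" using x_in_K K by simp
  have xI: "x \<in> I" using KI xK by auto
  define w where "w = f x"
  have rep: "\<And>y. y \<in> I \<Longrightarrow> x * f y = w * y"
    using iso_rep[OF lin xI] by (simp add: w_def mult.commute)
  have fI: "f ` I = K" using bij by (simp add: bij_betw_def)
  have wI: "scl w I = scl x K"
  proof -
    have "scl w I = (\<lambda>y. x * f y) ` I" unfolding scl_def using rep by (intro image_cong) auto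
    also have "\<dots> = scl x K" unfolding scl_def fI[symmetric] image_image ..
    finally show ?thesis .
  qed
  have wnzd: "nonzerodivisor w" unfolding nonzerodivisor_def
  proof (intro allI impI)
    fix z assume wz: "w * z = 0"
    obtain y0 where y0: "y0 \<in> I" "f y0 = x" using xK fI by auto
    have "x * (x * z) = (x * f y0) * z" using y0 by (simp add: mult_ac)
    also have "\<dots> = (w * z) * y0" using rep[OF y0(1)] by (simp add: mult_ac)
    also have "\<dots> = 0" using wz by simp
    finally have "x * (x * z) = 0" .
    then have "x * z = 0" using x unfolding nonzerodivisor_def by blast
    then show "z = 0" using x unfolding nonzerodivisor_def by blast
  qed
  have Kid: "is_ideal K" using colon_ideal K by simp
  have T: "ideal_mult J K = scl x I" using lemT[OF x xJ J] I K by simp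
  have one: "scl w (ideal_mult J K) = scl (x * x) K"
  proof -
    have "scl w (ideal_mult J K) = scl (w * x) I" by (simp add: T scl_scl)
    also have "\<dots> = scl x (scl w I)" by (simp add: scl_scl mult.commute)
    also have "\<dots> = scl (x * x) K" by (simp add: wI scl_scl)
    finally show ?thesis .
  qed
  define Q where "Q m = ideal_mult (ideal_pow J m) K" for m
  have Qid: "is_ideal (Q m)" for m unfolding Q_def by (rule ideal_mult_ideal)
  have claim: "scl (w ^ m) (Q m) = scl (x ^ (2 * m)) K" for m
  proof (induction m)
    case 0
    show ?case by (simp add: Q_def scl_one mult_UNIV[OF Kid])
  next
    case (Suc m)
    have QS: "Q (Suc m) = ideal_mult J (Q m)" by (simp add: Q_def ideal_mult_assoc)
    have "scl (w ^ Suc m) (Q (Suc m)) = scl w (scl (w ^ m) (ideal_mult J (Q m)))"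
      by (simp add: QS scl_scl)
    also have "\<dots> = scl w (ideal_mult J (scl (w ^ m) (Q m)))" by (simp add: scl_mult)
    also have "\<dots> = scl w (scl (x ^ (2 * m)) (ideal_mult J K))" by (simp add: Suc scl_mult)
    also have "\<dots> = scl (x ^ (2 * m)) (scl w (ideal_mult J K))"
      by (simp add: scl_scl mult.commute)
    also have "\<dots> = scl (x ^ (2 * Suc m)) K" by (simp add: one scl_scl pow2 mult_ac)
    finally show ?case .
  qed
  have Qn: "Q (Suc n) = scl x (Q n)"
  proof -
    have "Q (Suc n) = ideal_mult (ideal_mult (principal x) (ideal_pow J n)) K"
      by (simp add: Q_def n)
    also have "\<dots> = ideal_mult (principal x) (Q n)" by (simp add: Q_def ideal_mult_assoc)
    also have "\<dots> = scl x (Q n)" by (rule mult_principal[OF Qid])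
    finally show ?thesis .
  qed
  have "scl (x ^ (2 * n) * x) (scl x K) = scl (x ^ (2 * Suc n)) K"
    by (simp add: scl_scl pow2 mult_ac)
  also have "\<dots> = scl (w ^ Suc n) (Q (Suc n))" by (rule claim[symmetric])
  also have "\<dots> = scl (w * x) (scl (w ^ n) (Q n))" by (simp add: Qn scl_scl mult_ac)
  also have "\<dots> = scl (x ^ (2 * n) * x) (scl w K)" by (simp add: claim scl_scl mult_ac)
  finally have "scl (x ^ (2 * n) * x) (scl x K) = scl (x ^ (2 * n) * x) (scl w K)" .
  then have xKwK: "scl x K = scl w K"
    by (rule scl_cancel[rotated]) (intro nzd_mult nzd_power x)
  show "I = K"
  proof
    show "K \<subseteq> I" by (rule KI)
    show "I \<subseteq> K"
    proof
      fix y assume y: "y \<in> I"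
      have "w * y \<in> scl w I" unfolding scl_def using y by auto
      then have "w * y \<in> scl w K" using wI xKwK by simp
      then obtain k where k: "k \<in> K" "w * y = w * k" unfolding scl_def by auto
      then have "w * (y - k) = 0" by (simp add: right_diff_distrib)
      then have "y - k = 0" using wnzd unfolding nonzerodivisor_def by blast
      then show "y \<in> K" using k by simp
    qed
  qed
qed



lemma one_two:
  assumes x: "nonzerodivisor x" and xJ: "x \<in> J" and J: "is_ideal J"
    and n: "ideal_mult (principal x) (ideal_pow J n) = ideal_pow J (Suc n)"
    and I: "I = trace_ideal J" and K: "K = colon (principal x) J"
    and iso: "ideal_iso I (ideal_mult I I)"
  shows "I = K"
proof -
  obtain h where bij: "bij_betw h I (ideal_mult I I)" and lin: "\<forall>r. \<forall>a\<in>I. h (r * a) = r * h a"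
    using iso unfolding ideal_iso_def by blast
  have KI: "K \<subseteq> I" using K_sub_I[OF x xJ J] I K by simp
  have xK: "x \<in> K" using x_in_K K by simp
  have xI: "x \<in> I" using KI xK by auto
  have Iid: "is_ideal I" using trace_ideal_ideal I by simp
  have Kid: "is_ideal K" using colon_ideal K by simp
  define w where "w = h x"
  have rep: "\<And>y. y \<in> I \<Longrightarrow> x * h y = w * y"
    using iso_rep[OF lin xI] by (simp add: w_def mult.commute)
  have hI: "h ` I = ideal_mult I I" using bij by (simp add: bij_betw_def)
  have wI: "scl w I = scl x (ideal_mult I I)"
  proof -
    have "scl w I = (\<lambda>y. x * h y) ` I" unfolding scl_def using rep by (intro image_cong) auto
    also have "\<dots> = scl x (ideal_mult I I)" unfolding scl_def hI[symmetric] image_image ..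
    finally show ?thesis .
  qed
  have wnzd: "nonzerodivisor w" unfolding nonzerodivisor_def
  proof (intro allI impI)
    fix z assume wz: "w * z = 0"
    have "x * x \<in> ideal_mult I I" by (rule ideal_mult_mem[OF xI xI])
    then obtain y0 where y0: "y0 \<in> I" "h y0 = x * x" using hI by (metis imageE)
    have "x * ((x * x) * z) = (x * h y0) * z" using y0 by (simp add: mult_ac)
    also have "\<dots> = (w * z) * y0" using rep[OF y0(1)] by (simp add: mult_ac)
    also have "\<dots> = 0" using wz by simp
    finally have "x * ((x * x) * z) = 0" .
    moreover have "nonzerodivisor (x * (x * x))" by (intro nzd_mult x)
    ultimately show "z = 0" unfolding nonzerodivisor_def by (simp add: mult.assoc)
  qed
  have T: "ideal_mult J K = scl x I" using lemT[OF x xJ J] I K by simp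
  have one: "ideal_mult J (ideal_mult K I) = scl w I"
  proof -
    have "ideal_mult J (ideal_mult K I) = ideal_mult (scl x I) I"
      by (simp add: ideal_mult_assoc T)
    also have "\<dots> = ideal_mult I (scl x I)" by (rule ideal_mult_comm)
    also have "\<dots> = scl x (ideal_mult I I)" by (rule scl_mult)
    finally show ?thesis using wI by simp
  qed
  define E where "E m = ((\<lambda>S. ideal_mult K S) ^^ m) I" for m
  have E0: "E 0 = I" by (simp add: E_def)
  have ES: "E (Suc m) = ideal_mult K (E m)" for m by (simp add: E_def)
  define D where "D m = ideal_mult (ideal_pow J m) (E m)" for m
  have Did: "is_ideal (D m)" for m unfolding D_def by (rule ideal_mult_ideal)
  have claim: "D m = scl (w ^ m) I" for m
  proof (induction m)
    case 0
    show ?case by (simp add: D_def E0 scl_one mult_UNIV[OF Iid])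
  next
    case (Suc m)
    have "ideal_mult (ideal_pow J m) (ideal_mult K (E m))
        = ideal_mult (ideal_mult (ideal_pow J m) K) (E m)" by (rule ideal_mult_assoc)
    also have "\<dots> = ideal_mult (ideal_mult K (ideal_pow J m)) (E m)"
      by (simp add: ideal_mult_comm[of "ideal_pow J m" K])
    also have "\<dots> = ideal_mult K (D m)" by (simp add: D_def ideal_mult_assoc)
    finally have st: "ideal_mult (ideal_pow J m) (ideal_mult K (E m)) = ideal_mult K (D m)" .
    have "D (Suc m) = ideal_mult J (ideal_mult (ideal_pow J m) (ideal_mult K (E m)))"
      by (simp add: D_def ES ideal_mult_assoc)
    also have "\<dots> = ideal_mult J (ideal_mult K (scl (w ^ m) I))" by (simp add: st Suc)
    also have "\<dots> = scl (w ^ m) (ideal_mult J (ideal_mult K I))" by (simp add: scl_mult)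
    also have "\<dots> = scl (w ^ Suc m) I" by (simp add: one scl_scl mult_ac)
    finally show ?case .
  qed
  have "scl (w ^ n) (ideal_mult J I) = ideal_mult J (D n)" by (simp add: claim scl_mult)
  also have "\<dots> = ideal_mult (ideal_pow J (Suc n)) (E n)" by (simp add: D_def ideal_mult_assoc)
  also have "\<dots> = ideal_mult (ideal_mult (principal x) (ideal_pow J n)) (E n)" by (simp add: n)
  also have "\<dots> = ideal_mult (principal x) (D n)" by (simp add: D_def ideal_mult_assoc)
  also have "\<dots> = scl x (D n)" by (rule mult_principal[OF Did])
  also have "\<dots> = scl (w ^ n) (scl x I)" by (simp add: claim scl_scl mult_ac)
  finally have "scl (w ^ n) (ideal_mult J I) = scl (w ^ n) (scl x I)" .
  then have JI: "ideal_mult J I = scl x I" by (rule scl_cancel[OF nzd_power[OF wnzd]])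
  show "I = K"
  proof
    show "K \<subseteq> I" by (rule KI)
    show "I \<subseteq> K"
    proof
      fix y assume y: "y \<in> I"
      have "\<forall>a\<in>J. y * a \<in> principal x"
      proof
        fix a assume a: "a \<in> J"
        have "a * y \<in> scl x I" using ideal_mult_mem[OF a y] JI by simp
        then obtain s where "a * y = x * s" unfolding scl_def by auto
        then show "y * a \<in> principal x" unfolding principal_def by (auto simp: mult.commute)
      qed
      then show "y \<in> K" using K unfolding colon_def by simp
    qed
  qed
qed

lemma al_add:
  assumes x: "nonzerodivisor x" and k1: "k1 \<in> colon (principal x) J" and k2: "k2 \<in> colon (principal x) J"
  shows "al x J (k1 + k2) = (\<lambda>y. al x J k1 y + al x J k2 y)"
proof
  fix y show "al x J (k1 + k2) y = al x J k1 y + al x J k2 y"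
  proof (cases "y \<in> J")
    case True
    have "(k1 + k2) * y = x * (dv x k1 y + dv x k2 y)"
      using colon_eq[OF x k1 True] colon_eq[OF x k2 True] by (simp add: distrib_left distrib_right)
    then show ?thesis using True dv_eq[OF x] by (simp add: al_def)
  qed (simp add: al_def)
qed

lemma al_smul:
  assumes x: "nonzerodivisor x" and k: "k \<in> colon (principal x) J"
  shows "al x J (r * k) = (\<lambda>y. r * al x J k y)"
proof
  fix y show "al x J (r * k) y = r * al x J k y"
  proof (cases "y \<in> J")
    case True
    have "(r * k) * y = r * (k * y)" by (simp add: mult_ac)
    also have "\<dots> = x * (r * dv x k y)" using colon_eq[OF x k True] by (simp add: mult_ac)
    finally show ?thesis using True dv_eq[OF x] by (simp add: al_def)
  qed (simp add: al_def)
qed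

lemma al_bij:
  assumes x: "nonzerodivisor x" and xJ: "x \<in> J" and J: "is_ideal J"
  shows "bij_betw (al x J) (colon (principal x) J) (dual J)"
  unfolding bij_betw_def
proof
  show "inj_on (al x J) (colon (principal x) J)"
  proof (rule inj_onI)
    fix k1 k2 assume "al x J k1 = al x J k2"
    then have "al x J k1 x = al x J k2 x" by simp
    then show "k1 = k2" using al_x[OF x xJ] by simp
  qed
  show "al x J ` colon (principal x) J = dual J"
  proof
    show "al x J ` colon (principal x) J \<subseteq> dual J" using al_dual[OF x J] by auto
    show "dual J \<subseteq> al x J ` colon (principal x) J"
    proof
      fix \<alpha> assume a: "\<alpha> \<in> dual J"
      show "\<alpha> \<in> al x J ` colon (principal x) J"
        using dual_repr[OF x xJ a] by (metis image_eqI)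
    qed
  qed
qed

lemma three_four:
  assumes x: "nonzerodivisor x" and xJ: "x \<in> J" and J: "is_ideal J"
    and K: "K = colon (principal x) J"
  shows "ideal_iso I K \<longleftrightarrow> ideal_iso_dual I J"
proof
  assume "ideal_iso I K"
  then obtain f where bij: "bij_betw f I K" and add: "\<forall>a\<in>I. \<forall>b\<in>I. f (a + b) = f a + f b"
    and lin: "\<forall>r. \<forall>a\<in>I. f (r * a) = r * f a"
    unfolding ideal_iso_def by blast
  have fK: "\<And>a. a \<in> I \<Longrightarrow> f a \<in> K" using bij by (auto simp: bij_betw_def)
  show "ideal_iso_dual I J" unfolding ideal_iso_dual_def
  proof (intro exI conjI ballI allI)
    show "bij_betw (al x J \<circ> f) I (dual J)"
      by (rule bij_betw_trans[OF bij]) (use al_bij[OF x xJ J] K in simp)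
    fix a b assume a: "a \<in> I" and b: "b \<in> I"
    show "(al x J \<circ> f) (a + b) = (\<lambda>y. (al x J \<circ> f) a y + (al x J \<circ> f) b y)"
      using add a b fK[OF a] fK[OF b] al_add[OF x] K by simp
  next
    fix r a assume a: "a \<in> I"
    show "(al x J \<circ> f) (r * a) = (\<lambda>y. r * (al x J \<circ> f) a y)"
      using lin a fK[OF a] al_smul[OF x] K by simp
  qed
next
  assume "ideal_iso_dual I J"
  then obtain F where bij: "bij_betw F I (dual J)"
    and add: "\<forall>a\<in>I. \<forall>b\<in>I. F (a + b) = (\<lambda>y. F a y + F b y)"
    and lin: "\<forall>r. \<forall>a\<in>I. F (r * a) = (\<lambda>y. r * F a y)"
    unfolding ideal_iso_dual_def by blast
  have FJ: "\<And>a. a \<in> I \<Longrightarrow> F a \<in> dual J" using bij by (auto simp: bij_betw_def)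
  have FI: "F ` I = dual J" using bij by (simp add: bij_betw_def)
  have inj: "inj_on F I" using bij by (simp add: bij_betw_def)
  show "ideal_iso I K" unfolding ideal_iso_def
  proof (intro exI conjI ballI allI)
    show "bij_betw (\<lambda>a. F a x) I K" unfolding bij_betw_def
    proof
      show "inj_on (\<lambda>a. F a x) I"
      proof (rule inj_onI)
        fix a b assume a: "a \<in> I" and b: "b \<in> I" and e: "F a x = F b x"
        have "F a = al x J (F a x)" using dual_repr(2)[OF x xJ FJ[OF a]] by simp
        also have "\<dots> = al x J (F b x)" using e by simp
        also have "\<dots> = F b" using dual_repr(2)[OF x xJ FJ[OF b]] by simp
        finally show "a = b" using inj a b by (simp add: inj_on_def)
      qed
      show "(\<lambda>a. F a x) ` I = K"
      proof
        show "(\<lambda>a. F a x) ` I \<subseteq> K" using dual_repr(1)[OF x xJ FJ] K by auto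
        show "K \<subseteq> (\<lambda>a. F a x) ` I"
        proof
          fix k assume k: "k \<in> K"
          then have "al x J k \<in> dual J" using al_dual[OF x J] K by simp
          then obtain a where a: "a \<in> I" "F a = al x J k" using FI by (metis imageE)
          then have "F a x = k" using al_x[OF x xJ] by simp
          then show "k \<in> (\<lambda>a. F a x) ` I" using a by (metis image_eqI)
        qed
      qed
    qed
    fix a b assume a: "a \<in> I" and b: "b \<in> I"
    show "F (a + b) x = F a x + F b x" using add a b by simp
  next
    fix r a assume a: "a \<in> I"
    show "F (r * a) x = r * F a x" using lin a by simp
  qed
qed


theorem proposition3p8:
  fixes J :: "'a::comm_ring_1 set" and x :: 'a and I :: "'a set"
  assumes CM: "cohen_macaulay_local TYPE('a)"
    and dim1: "krull_dim TYPE('a) = 1"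
    and J: "is_ideal J" and reg: "regular_ideal J"
    and red: "principal_reduction x J"
    and I: "I = trace_ideal J"
  shows "(ideal_iso I (ideal_mult I I) \<longrightarrow> I = colon (principal x) J)
       \<and> (I = colon (principal x) J \<longleftrightarrow> ideal_iso I (colon (principal x) J))
       \<and> (ideal_iso I (colon (principal x) J) \<longleftrightarrow> ideal_iso_dual I J)"
proof -
  have x: "nonzerodivisor x" by (rule x_nzd[OF J reg red])
  have xJ: "x \<in> J" using red unfolding principal_reduction_def by simp
  obtain n where n: "ideal_mult (principal x) (ideal_pow J n) = ideal_pow J (Suc n)"
    using red unfolding principal_reduction_def by auto
  have idiso: "ideal_iso S S" for S :: "'a set"
    unfolding ideal_iso_def by (rule exI[of _ id]) simp
  show ?thesis
  proof (intro conjI impI iffI)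
    assume "ideal_iso I (ideal_mult I I)"
    then show "I = colon (principal x) J" by (rule one_two[OF x xJ J n I refl])
  next
    assume "I = colon (principal x) J"
    then show "ideal_iso I (colon (principal x) J)" using idiso by metis
  next
    assume "ideal_iso I (colon (principal x) J)"
    then show "I = colon (principal x) J" by (rule three_two[OF x xJ J n I refl])
  next
    assume "ideal_iso I (colon (principal x) J)"
    then show "ideal_iso_dual I J" using three_four[OF x xJ J refl] by simp
  next
    assume "ideal_iso_dual I J"
    then show "ideal_iso I (colon (principal x) J)" using three_four[OF x xJ J refl] by simp
  qed
qed

end
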